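(* For any boolean function $f:\{0,1\}^n\to\{0,1\}$ that depends on all $n$ input bits, $Q_E^{na}(f)\ge\lceil n/2\rceil$.
   Context: A function $f$ depends on bit $i$ if there is an $x$ with $f(x)\ne f(x+e_i)$, where $e_i$ is the bit string with 1 in position $i$ and 0 elsewhere, and addition is bitwise mod 2. Nonadaptive exact quantum query model: let $\mathcal H_{\rm in}$ have orthonormal basis $|0\rangle,\dots,|n\rangle$ and let the oracle $O_x$ act by $|i\rangle\mapsto(-1)^{x_i}|i\rangle$ with convention $x_0=0$. A nonadaptive quantum algorithm making $k$ queries consists of an input-independent state $|\psi\rangle\in\mathcal H_{\rm in}^{\otimes k}\otimes\mathcal H_{\rm work}$ (with $\mathcal H_{\rm work}$ a finite-dimensional workspace), to which $O_x^{\otimes k}\otimes I$ is applied, followed by an input-independent two-outcome measurement with outcomes labelled $0,1$. It computes $f$ exactly if for every $x$ the outcome is $f(x)$ with probability $1$. $Q_E^{na}(f)$ is the minimum such $k$. *)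

theory Defs
  imports Complex_Main "HOL-Library.Extended_Nat"
begin

text \<open>Bit strings of length n are lists x :: bool list with length x = n;
  bit i of the paper (1 \<le> i \<le> n) is x ! (i - 1).\<close>

definition depends_on :: "nat \<Rightarrow> (bool list \<Rightarrow> bool) \<Rightarrow> nat \<Rightarrow> bool" where
  "depends_on n f i = (\<exists>x. length x = n \<and> f x \<noteq> f (x[i := \<not> x ! i]))"

text \<open>Basis of H_in^{\<otimes>k} \<otimes> H_work: query tuples (i_1,...,i_k) with
  0 \<le> i_j \<le> n, and workspace index w < d.\<close>
definition query_basis :: "nat \<Rightarrow> nat \<Rightarrow> nat \<Rightarrow> (nat list \<times> nat) set" where
  "query_basis n k d = {(qs, w). length qs = k \<and> (\<forall>q\<in>set qs. q \<le> n) \<and> w < d}"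

definition oracle_bit :: "bool list \<Rightarrow> nat \<Rightarrow> bool" where
  "oracle_bit x i = (if i = 0 then False else x ! (i - 1))"

text \<open>Eigenvalue of O_x^{\<otimes>k} on the basis vector |i_1 ... i_k>.\<close>
definition oracle_phase :: "bool list \<Rightarrow> nat list \<Rightarrow> complex" where
  "oracle_phase x qs = prod_list (map (\<lambda>q. if oracle_bit x q then -1 else 1) qs)"

definition sqnorm :: "(nat list \<times> nat) set \<Rightarrow> (nat list \<times> nat \<Rightarrow> complex) \<Rightarrow> real" where
  "sqnorm B v = (\<Sum>b\<in>B. (cmod (v b))^2)"

definition qform :: "(nat list \<times> nat) set \<Rightarrow> (nat list \<times> nat \<Rightarrow> nat list \<times> nat \<Rightarrow> complex)
    \<Rightarrow> (nat list \<times> nat \<Rightarrow> complex) \<Rightarrow> complex" where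
  "qform B M v = (\<Sum>b\<in>B. \<Sum>b'\<in>B. cnj (v b) * M b b' * v b')"

text \<open>A two-outcome measurement {E_0, E_1} (POVM) with E_1 = M, E_0 = I - M:
  both positive semidefinite, i.e. 0 \<le> <v,Mv> \<le> <v,v> for all v.\<close>
definition two_outcome_measurement ::
    "(nat list \<times> nat) set \<Rightarrow> (nat list \<times> nat \<Rightarrow> nat list \<times> nat \<Rightarrow> complex) \<Rightarrow> bool" where
  "two_outcome_measurement B M =
     (\<forall>v. Im (qform B M v) = 0 \<and> 0 \<le> Re (qform B M v) \<and> Re (qform B M v) \<le> sqnorm B v)"

text \<open>A nonadaptive k-query algorithm computing f exactly: for every input x the
  probability <phi_x, E_1 phi_x> of outcome 1 equals f(x) (so outcome f(x) has
  probability 1), where phi_x = (O_x^{\<otimes>k} \<otimes> I) psi.\<close>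
definition na_exact_algorithm :: "nat \<Rightarrow> (bool list \<Rightarrow> bool) \<Rightarrow> nat \<Rightarrow> bool" where
  "na_exact_algorithm n f k =
     (\<exists>d \<psi> M. 0 < d \<and> sqnorm (query_basis n k d) \<psi> = 1
        \<and> two_outcome_measurement (query_basis n k d) M
        \<and> (\<forall>x. length x = n \<longrightarrow>
              qform (query_basis n k d) M (\<lambda>b. oracle_phase x (fst b) * \<psi> b)
                = (if f x then 1 else 0)))"

definition Q_E_na :: "nat \<Rightarrow> (bool list \<Rightarrow> bool) \<Rightarrow> enat" where
  "Q_E_na n f = (INF k \<in> {k. na_exact_algorithm n f k}. enat k)"

end

theory Submission
  imports Defs
begin

definition bf :: "(nat list \<times> nat) set \<Rightarrow> (nat list \<times> nat \<Rightarrow> nat list \<times> nat \<Rightarrow> complex)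
    \<Rightarrow> (nat list \<times> nat \<Rightarrow> complex) \<Rightarrow> (nat list \<times> nat \<Rightarrow> complex) \<Rightarrow> complex" where
  "bf B M u v = (\<Sum>b\<in>B. \<Sum>b'\<in>B. cnj (u b) * M b b' * v b')"

definition ip :: "(nat list \<times> nat) set \<Rightarrow> (nat list \<times> nat \<Rightarrow> complex) \<Rightarrow> (nat list \<times> nat \<Rightarrow> complex) \<Rightarrow> complex" where
  "ip B u v = (\<Sum>b\<in>B. cnj (u b) * v b)"

lemma qform_expand:
  "qform B M (\<lambda>b. u b + t * v b) = qform B M u + t * bf B M u v + cnj t * bf B M v u + cnj t * t * qform B M v"
  by (simp add: qform_def bf_def sum.distrib sum_distrib_left algebra_simps)

lemma ip_expand:
  "ip B (\<lambda>b. u b + t * v b) (\<lambda>b. u b + t * v b) = ip B u u + t * ip B u v + cnj t * ip B v u + cnj t * t * ip B v v"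
  by (simp add: ip_def sum.distrib sum_distrib_left algebra_simps)

lemma cn2: "complex_of_real ((cmod z)^2) = cnj z * z"
  using complex_norm_square[of z] by (simp only: mult.commute)

lemma sqnorm_ip: "complex_of_real (sqnorm B w) = ip B w w"
  unfolding sqnorm_def ip_def of_real_sum cn2 ..

lemma ip_swap: "ip B v u = cnj (ip B u v)"
  unfolding ip_def by (simp add: mult.commute)

lemma lin0: assumes "\<And>s::real. 0 \<le> 1 + s * a" shows "a = 0"
proof (rule ccontr)
  assume "a \<noteq> 0"
  have "0 \<le> 1 + (-2/a) * a" by (rule assms)
  with \<open>a \<noteq> 0\<close> show False by simp
qed

lemma quad0: assumes "\<And>s::real. 0 \<le> s * a + s^2" shows "a = 0"
proof -
  have "0 \<le> (-a/2) * a + (-a/2)^2" by (rule assms)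
  hence "a^2 \<le> 0" by (simp add: power2_eq_square field_simps)
  thus ?thesis by simp
qed

lemma orth:
  assumes M: "two_outcome_measurement B M"
    and qu: "qform B M u = 1" and qv: "qform B M v = 0"
    and su: "sqnorm B u = 1" and sv: "sqnorm B v = 1"
  shows "ip B u v = 0"
proof -
  define A where "A = bf B M u v"
  define C where "C = bf B M v u"
  define G where "G = ip B u v"
  have Q: "qform B M (\<lambda>b. u b + t * v b) = 1 + t * A + cnj t * C" for t
    using qform_expand[of B M u t v] qu qv A_def C_def by simp
  have S: "sqnorm B (\<lambda>b. u b + t * v b) = 1 + Re (t * G + cnj t * cnj G) + Re (cnj t * t)" for t
  proof -
    have "complex_of_real (sqnorm B (\<lambda>b. u b + t * v b)) = 1 + t * G + cnj t * cnj G + cnj t * t"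
      using ip_expand[of B u t v] sqnorm_ip[of B u] sqnorm_ip[of B v] sqnorm_ip[of B "\<lambda>b. u b + t * v b"]
        su sv ip_swap[of B v u] G_def by simp
    hence "Re (complex_of_real (sqnorm B (\<lambda>b. u b + t * v b))) = Re (1 + t * G + cnj t * cnj G + cnj t * t)"
      by simp
    thus ?thesis by simp
  qed
  have R1: "Re (A + C) = 0"
  proof (rule lin0)
    fix s :: real
    have "0 \<le> Re (qform B M (\<lambda>b. u b + complex_of_real s * v b))" using M unfolding two_outcome_measurement_def by blast
    thus "0 \<le> 1 + s * Re (A + C)" using Q[of "complex_of_real s"] by (simp add: algebra_simps)
  qed
  have R2: "Re (\<i> * A - \<i> * C) = 0"
  proof (rule lin0)
    fix s :: real
    have "0 \<le> Re (qform B M (\<lambda>b. u b + (\<i> * complex_of_real s) * v b))" using M unfolding two_outcome_measurement_def by blast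
    hence "0 \<le> Re (1 + (\<i> * complex_of_real s) * A + cnj (\<i> * complex_of_real s) * C)" by (simp only: Q)
    thus "0 \<le> 1 + s * Re (\<i> * A - \<i> * C)" by (simp add: algebra_simps)
  qed
  have G1: "Re (G + cnj G) = 0"
  proof (rule quad0)
    fix s :: real
    have "Re (qform B M (\<lambda>b. u b + complex_of_real s * v b)) \<le> sqnorm B (\<lambda>b. u b + complex_of_real s * v b)"
      using M unfolding two_outcome_measurement_def by blast
    moreover have "Re (qform B M (\<lambda>b. u b + complex_of_real s * v b)) = 1"
    proof -
      have "Re (qform B M (\<lambda>b. u b + complex_of_real s * v b)) = Re (1 + complex_of_real s * A + cnj (complex_of_real s) * C)"
        by (simp only: Q)
      also have "\<dots> = 1 + s * Re (A + C)" by (simp add: algebra_simps)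
      finally show ?thesis using R1 by simp
    qed
    ultimately show "0 \<le> s * Re (G + cnj G) + s^2" using S[of "complex_of_real s"]
      by (simp add: algebra_simps power2_eq_square)
  qed
  have G2: "Re (\<i> * G - \<i> * cnj G) = 0"
  proof (rule quad0)
    fix s :: real
    have "Re (qform B M (\<lambda>b. u b + (\<i> * complex_of_real s) * v b)) \<le> sqnorm B (\<lambda>b. u b + (\<i> * complex_of_real s) * v b)"
      using M unfolding two_outcome_measurement_def by blast
    moreover have "Re (qform B M (\<lambda>b. u b + (\<i> * complex_of_real s) * v b)) = 1"
    proof -
      have "Re (1 + (\<i> * complex_of_real s) * A + cnj (\<i> * complex_of_real s) * C) = 1 + s * Re (\<i> * A - \<i> * C)"
        by (simp add: algebra_simps)
      moreover have "Re (qform B M (\<lambda>b. u b + (\<i> * complex_of_real s) * v b)) = Re (1 + (\<i> * complex_of_real s) * A + cnj (\<i> * complex_of_real s) * C)"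
        by (simp only: Q)
      ultimately show ?thesis using R2 by simp
    qed
    ultimately show "0 \<le> s * Re (\<i> * G - \<i> * cnj G) + s^2" using S[of "\<i> * complex_of_real s"]
      by (simp add: algebra_simps power2_eq_square)
  qed
  have "Re G = 0" "Im G = 0" using G1 G2 by simp_all
  thus ?thesis using G_def complex_eqI by (metis zero_complex.simps)
qed

lemma phase_Cons: "oracle_phase x (q#qs) = (if oracle_bit x q then -1 else 1) * oracle_phase x qs"
  by (simp add: oracle_phase_def)

lemma phase_cnj: "cnj (oracle_phase x qs) = oracle_phase x qs"
  by (induction qs) (auto simp: phase_Cons oracle_phase_def)

lemma phase_norm: "cmod (oracle_phase x qs) = 1"
  by (induction qs) (auto simp: phase_Cons norm_mult oracle_phase_def)

lemma bit_flip:
  assumes "length x = n" "i < n"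
  shows "oracle_bit (x[i := \<not> x ! i]) q = (if q = Suc i then \<not> oracle_bit x q else oracle_bit x q)"
  using assms by (cases q) (auto simp: oracle_bit_def nth_list_update)

lemma phase_flip:
  assumes "length x = n" "i < n"
  shows "oracle_phase x qs * oracle_phase (x[i := \<not> x ! i]) qs = (-1) ^ count_list qs (Suc i)"
proof (induction qs)
  case Nil
  then show ?case by (simp add: oracle_phase_def)
next
  case (Cons q qs)
  have "oracle_phase x (q#qs) * oracle_phase (x[i := \<not> x ! i]) (q#qs)
      = ((if oracle_bit x q then -1 else 1) * (if oracle_bit (x[i := \<not> x ! i]) q then -1 else 1))
        * (oracle_phase x qs * oracle_phase (x[i := \<not> x ! i]) qs)"
    by (simp add: phase_Cons algebra_simps)
  also have "\<dots> = (if q = Suc i then -1 else 1) * (-1) ^ count_list qs (Suc i)"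
    using Cons bit_flip[OF assms] by auto
  finally show ?case by simp
qed

lemma card_odd:
  "card {i. i < n \<and> odd (count_list qs (Suc i))} \<le> length qs"
proof -
  have "{i. i < n \<and> odd (count_list qs (Suc i))} \<subseteq> (\<lambda>q. q - 1) ` set qs"
  proof
    fix i assume "i \<in> {i. i < n \<and> odd (count_list qs (Suc i))}"
    hence "count_list qs (Suc i) \<noteq> 0" by (metis (mono_tags) even_zero mem_Collect_eq)
    hence "Suc i \<in> set qs" by (simp add: count_list_0_iff)
    thus "i \<in> (\<lambda>q. q - 1) ` set qs" by force
  qed
  hence "card {i. i < n \<and> odd (count_list qs (Suc i))} \<le> card ((\<lambda>q. q - 1) ` set qs)"
    by (intro card_mono) auto
  also have "\<dots> \<le> card (set qs)" by (rule card_image_le) simp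
  also have "\<dots> \<le> length qs" by (rule card_length)
  finally show ?thesis .
qed

lemma finite_qb: "finite (query_basis n k d)"
proof -
  have "query_basis n k d \<subseteq> {qs. set qs \<subseteq> {..n} \<and> length qs = k} \<times> {..<d}"
    by (auto simp: query_basis_def)
  moreover have "finite ({qs. set qs \<subseteq> {..n} \<and> length qs = k} \<times> {..<d})"
    by (intro finite_cartesian_product finite_lists_length_eq) auto
  ultimately show ?thesis by (rule finite_subset)
qed

lemma sqnorm_phase: "sqnorm B (\<lambda>b. oracle_phase x (fst b) * \<psi> b) = sqnorm B \<psi>"
  by (simp add: sqnorm_def norm_mult phase_norm)

lemma ip_phase:
  assumes "length x = n" "i < n"
  shows "ip B (\<lambda>b. oracle_phase x (fst b) * \<psi> b) (\<lambda>b. oracle_phase (x[i := \<not> x ! i]) (fst b) * \<psi> b)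
    = complex_of_real (\<Sum>b\<in>B. (-1) ^ count_list (fst b) (Suc i) * (cmod (\<psi> b))^2)"
  unfolding ip_def of_real_sum
proof (intro sum.cong refl)
  fix b
  have "cnj (oracle_phase x (fst b) * \<psi> b) * (oracle_phase (x[i := \<not> x ! i]) (fst b) * \<psi> b)
     = (oracle_phase x (fst b) * oracle_phase (x[i := \<not> x ! i]) (fst b)) * (cnj (\<psi> b) * \<psi> b)"
    by (simp add: phase_cnj algebra_simps)
  also have "\<dots> = (-1) ^ count_list (fst b) (Suc i) * complex_of_real ((cmod (\<psi> b))^2)"
    by (simp only: phase_flip[OF assms] cn2)
  finally show "cnj (oracle_phase x (fst b) * \<psi> b) * (oracle_phase (x[i := \<not> x ! i]) (fst b) * \<psi> b)
     = complex_of_real ((-1) ^ count_list (fst b) (Suc i) * (cmod (\<psi> b))^2)" by simp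
qed

lemma key_bound:
  assumes dep: "\<forall>i<n. depends_on n f i" and alg: "na_exact_algorithm n f k"
  shows "real n / 2 \<le> real k"
proof -
  obtain d \<psi> M where d: "0 < d" and psi1: "sqnorm (query_basis n k d) \<psi> = 1"
    and M: "two_outcome_measurement (query_basis n k d) M"
    and ex: "\<forall>x. length x = n \<longrightarrow>
              qform (query_basis n k d) M (\<lambda>b. oracle_phase x (fst b) * \<psi> b) = (if f x then 1 else 0)"
    using alg unfolding na_exact_algorithm_def by blast
  define B where "B = query_basis n k d"
  have fin: "finite B" unfolding B_def by (rule finite_qb)
  define w where "w b = (cmod (\<psi> b))^2" for b
  have wsum: "(\<Sum>b\<in>B. w b) = 1" using psi1 unfolding B_def w_def sqnorm_def by simp
  have w0: "0 \<le> w b" for b unfolding w_def by simp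
  define ind where "ind i (b::nat list \<times> nat) = (if odd (count_list (fst b) (Suc i)) then 1 else (0::real))" for i b
  have E: "(\<Sum>b\<in>B. (-1) ^ count_list (fst b) (Suc i) * w b) = 0" if "i < n" for i
  proof -
    obtain x where x: "length x = n" "f x \<noteq> f (x[i := \<not> x ! i])"
      using dep \<open>i < n\<close> unfolding depends_on_def by blast
    define y where "y = x[i := \<not> x ! i]"
    have ly: "length y = n" using x y_def by simp
    let ?\<phi> = "\<lambda>z b. oracle_phase z (fst b) * \<psi> b"
    have s1: "sqnorm B (?\<phi> z) = 1" for z using sqnorm_phase psi1 B_def by simp
    have ipxy: "ip B (?\<phi> x) (?\<phi> y) = complex_of_real (\<Sum>b\<in>B. (-1) ^ count_list (fst b) (Suc i) * w b)"
      using ip_phase[OF x(1) \<open>i < n\<close>] unfolding y_def w_def by simp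
    have "ip B (?\<phi> x) (?\<phi> y) = 0"
    proof (cases "f x")
      case True
      hence "\<not> f y" using x y_def by simp
      show ?thesis
        by (rule orth[OF M[folded B_def]]) (use ex x(1) ly True \<open>\<not> f y\<close> s1 B_def in auto)
    next
      case False
      hence "f y" using x y_def by simp
      have "ip B (?\<phi> y) (?\<phi> x) = 0"
        by (rule orth[OF M[folded B_def]]) (use ex x(1) ly False \<open>f y\<close> s1 B_def in auto)
      thus ?thesis using ip_swap[of B "?\<phi> y" "?\<phi> x"] by simp
    qed
    hence "complex_of_real (\<Sum>b\<in>B. (-1) ^ count_list (fst b) (Suc i) * w b) = 0" using ipxy by simp
    thus ?thesis by (simp only: of_real_eq_0_iff)
  qed
  have half: "(\<Sum>b\<in>B. ind i b * w b) = 1/2" if "i < n" for i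
  proof -
    have "(-1::real) ^ count_list (fst b) (Suc i) = 1 - 2 * ind i b" for b
      unfolding ind_def by simp
    hence "(\<Sum>b\<in>B. (-1) ^ count_list (fst b) (Suc i) * w b) = (\<Sum>b\<in>B. w b - 2 * (ind i b * w b))"
      by (intro sum.cong refl) (simp only: left_diff_distrib mult_1_left mult.assoc)
    also have "\<dots> = (\<Sum>b\<in>B. w b) - 2 * (\<Sum>b\<in>B. ind i b * w b)"
      by (simp add: sum_subtractf sum_distrib_left)
    finally have "(\<Sum>b\<in>B. (-1) ^ count_list (fst b) (Suc i) * w b) = (\<Sum>b\<in>B. w b) - 2 * (\<Sum>b\<in>B. ind i b * w b)" .
    thus ?thesis using E[OF that] wsum by simp
  qed
  have "(\<Sum>i<n. \<Sum>b\<in>B. ind i b * w b) = (\<Sum>i<n. 1/2)" using half by (intro sum.cong) auto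
  hence "real n / 2 = (\<Sum>i<n. \<Sum>b\<in>B. ind i b * w b)" by simp
  also have "\<dots> = (\<Sum>b\<in>B. w b * (\<Sum>i<n. ind i b))"
    by (subst sum.swap) (simp add: sum_distrib_left mult.commute)
  also have "\<dots> \<le> (\<Sum>b\<in>B. w b * real k)"
  proof (rule sum_mono)
    fix b assume b: "b \<in> B"
    have "(\<Sum>i<n. ind i b) = real (card {i. i < n \<and> odd (count_list (fst b) (Suc i))})"
      unfolding ind_def by (simp add: sum.If_cases lessThan_def Collect_conj_eq)
    also have "\<dots> \<le> real (length (fst b))" using card_odd by simp
    also have "\<dots> = real k" using b unfolding B_def query_basis_def by auto
    finally show "w b * (\<Sum>i<n. ind i b) \<le> w b * real k" using w0 by (simp add: mult_left_mono)
  qed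
  also have "\<dots> = real k" using wsum by (simp add: sum_distrib_right[symmetric])
  finally show ?thesis .
qed

theorem corollary7p5:
  fixes f :: "bool list \<Rightarrow> bool" and n :: nat
  assumes "\<forall>i<n. depends_on n f i"
  shows "enat (nat \<lceil>real n / 2\<rceil>) \<le> Q_E_na n f"
  unfolding Q_E_na_def
proof (rule INF_greatest)
  fix k assume "k \<in> {k. na_exact_algorithm n f k}"
  hence "real n / 2 \<le> real k" using key_bound assms by blast
  hence "\<lceil>real n / 2\<rceil> \<le> int k" by (simp add: ceiling_le_iff)
  hence "nat \<lceil>real n / 2\<rceil> \<le> k" by linarith
  thus "enat (nat \<lceil>real n / 2\<rceil>) \<le> enat k" by (simp only: enat_ord_simps)
qed

end
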